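(* Let $(\nu_n)_{n=1}^\infty$ be an increasing sequence of positive integers and let $\alpha=\liminf_{n\to\infty}\frac{\nu_n}{n}\in[0,\infty]$. Let \[F((\nu_n)_{n=1}^\infty)=\{x\in J\colon a_{n}(x),\ldots,a_{n+\nu_n-1}(x)\ \text{is an arithmetic progression for infinitely many}\ n\geq1\}.\] Then $\dim_{\rm H} F((\nu_n)_{n=1}^\infty)\le \frac{1}{2(1+\alpha)}$ (interpreted as $0$ when $\alpha=\infty$).
   Context: Every irrational $x\in(0,1)$ has a regular continued fraction expansion with partial quotients $a_n(x)\in\mathbb N$, $n\ge1$. $J=\{x\in(0,1)\setminus\mathbb Q\colon a_n(x)<a_{n+1}(x)\text{ for every }n\ge1\}$. $\dim_{\rm H}$ denotes Hausdorff dimension in $[0,1]$. *)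

theory Defs
  imports "HOL-Analysis.Analysis"
begin

definition gauss_map :: "real \<Rightarrow> real" where
  "gauss_map x = frac (1 / x)"

definition cf_a :: "nat \<Rightarrow> real \<Rightarrow> nat" where
  "cf_a n x = nat \<lfloor>1 / ((gauss_map ^^ (n - 1)) x)\<rfloor>"

definition J_set :: "real set" where
  "J_set = {x. 0 < x \<and> x < 1 \<and> x \<notin> \<rat> \<and> (\<forall>n\<ge>1. cf_a n x < cf_a (Suc n) x)}"

definition cf_AP :: "real \<Rightarrow> nat \<Rightarrow> nat \<Rightarrow> bool" where
  "cf_AP x n m \<longleftrightarrow> (\<exists>d::int. \<forall>i<m. int (cf_a (n + i) x) = int (cf_a n x) + int i * d)"

definition F_set :: "(nat \<Rightarrow> nat) \<Rightarrow> real set" where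
  "F_set \<nu> = {x \<in> J_set. infinite {n. n \<ge> 1 \<and> cf_AP x n (\<nu> n)}}"

definition hausdorff_content :: "real \<Rightarrow> real \<Rightarrow> real set \<Rightarrow> ennreal" where
  "hausdorff_content s \<delta> A =
     (INF C \<in> {C :: nat \<Rightarrow> real set. A \<subseteq> (\<Union>n. C n) \<and>
                 (\<forall>n. bounded (C n) \<and> diameter (C n) \<le> \<delta>)}.
        (\<Sum>n. ennreal (diameter (C n) powr s)))"

definition hausdorff_measure :: "real \<Rightarrow> real set \<Rightarrow> ennreal" where
  "hausdorff_measure s A = (SUP \<delta> \<in> {0<..}. hausdorff_content s \<delta> A)"

definition hausdorff_dim :: "real set \<Rightarrow> real" where
  "hausdorff_dim A = Inf {s. 0 \<le> s \<and> hausdorff_measure s A = 0}"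

end

theory Submission
  imports Defs
begin


definition cont :: "real \<Rightarrow> real set \<Rightarrow> ennreal" where
  "cont s A = (INF C \<in> {C::nat \<Rightarrow> real set. A \<subseteq> (\<Union>n. C n) \<and> (\<forall>n. bounded (C n))}.
      \<Sum>n. ennreal (diameter (C n) powr s))"

lemma cont_le: "A \<subseteq> (\<Union>n. C n) \<Longrightarrow> (\<forall>n. bounded (C n)) \<Longrightarrow> cont s A \<le> (\<Sum>n. ennreal (diameter (C n) powr s))"
  unfolding cont_def by (rule INF_lower) auto

lemma cont_mono: "A \<subseteq> B \<Longrightarrow> cont s A \<le> cont s B"
  unfolding cont_def by (rule INF_superset_mono) auto

lemma cont_single: assumes "bounded A" shows "cont s A \<le> ennreal (diameter A powr s)"
proof -
  let ?C = "\<lambda>n::nat. if n = 0 then A else {}"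
  have "cont s A \<le> (\<Sum>n. ennreal (diameter (?C n) powr s))"
    by (rule cont_le) (auto simp: assms)
  also have "(\<Sum>n. ennreal (diameter (?C n) powr s)) = (\<Sum>n\<in>{0}. ennreal (diameter (?C n) powr s))"
    by (rule suminf_finite) auto
  finally show ?thesis by simp
qed

lemma cont_empty[simp]: "cont s {} = 0"
  using cont_single[of "{}" s] by simp

lemma cont_UN: "cont s (\<Union>k. A k) \<le> (\<Sum>k. cont s (A k))"
proof (rule ennreal_le_epsilon)
  fix e :: real assume top: "(\<Sum>k. cont s (A k)) < top" and e: "0 < e"
  let ?ep = "\<lambda>k::nat. e * (1/2)^Suc k"
  have "\<exists>C. A k \<subseteq> (\<Union>n. C n) \<and> (\<forall>n. bounded (C n)) \<and>
      (\<Sum>n. ennreal (diameter (C n) powr s)) < cont s (A k) + ennreal (?ep k)" for k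
  proof -
    have fin: "cont s (A k) < top"
      using top ennreal_suminf_lessD by blast
    have "cont s (A k) < cont s (A k) + ennreal (?ep k)"
      using fin e ennreal_add_left_cancel_less[of "cont s (A k)" 0 "ennreal (?ep k)"] by simp
    then show ?thesis unfolding cont_def[of s "A k"] INF_less_iff by auto
  qed
  then obtain C where C: "\<And>k. A k \<subseteq> (\<Union>n. C k n)" "\<And>k n. bounded (C k n)"
    "\<And>k. (\<Sum>n. ennreal (diameter (C k n) powr s)) < cont s (A k) + ennreal (?ep k)"
    by metis
  define D where "D i = C (fst (prod_decode i)) (snd (prod_decode i))" for i
  have cov: "(\<Union>k. A k) \<subseteq> (\<Union>i. D i)"
  proof
    fix x assume "x \<in> (\<Union>k. A k)"
    then obtain k n where "x \<in> C k n" using C(1) by blast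
    then have "x \<in> D (prod_encode (k, n))" by (simp add: D_def)
    then show "x \<in> (\<Union>i. D i)" by blast
  qed
  have "cont s (\<Union>k. A k) \<le> (\<Sum>i. ennreal (diameter (D i) powr s))"
    by (rule cont_le[OF cov]) (simp add: D_def C(2))
  also have "\<dots> = (\<Sum>k. \<Sum>n. ennreal (diameter (C k n) powr s))"
    unfolding D_def by (rule suminf_ennreal_2dimen[where f="\<lambda>p. ennreal (diameter (C (fst p) (snd p)) powr s)"]) simp
  also have "\<dots> \<le> (\<Sum>k. cont s (A k) + ennreal (?ep k))"
    by (intro suminf_le summableI less_imp_le C(3))
  also have "\<dots> = (\<Sum>k. cont s (A k)) + (\<Sum>k. ennreal (?ep k))"
    by (intro suminf_add[symmetric] summableI)
  also have "(\<Sum>k. ennreal (?ep k)) = ennreal e"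
  proof -
    have "?ep sums (e * 1)" by (rule sums_mult[OF power_half_series])
    then show ?thesis by (intro suminf_ennreal_eq) (use e in auto)
  qed
  finally show "cont s (\<Union>k. A k) \<le> (\<Sum>k. cont s (A k)) + ennreal e" .
qed


definition phi :: "nat \<Rightarrow> real \<Rightarrow> real" where "phi b t = 1 / (real b + t)"
definition g :: "real \<Rightarrow> nat \<Rightarrow> real" where "g s b = (1 / real b ^ 2) powr s"

lemma g_nonneg: "0 \<le> g s b" by (simp add: g_def)

lemma phi_lip:
  assumes b: "1 \<le> b" and x: "x \<in> {0..1}" and y: "y \<in> {0..1}"
  shows "\<bar>phi b x - phi b y\<bar> \<le> \<bar>x - y\<bar> / real b ^ 2"
proof -
  have bx: "real b + x \<ge> real b" "real b + y \<ge> real b" and bp: "real b \<ge> 1" using x y b by auto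
  have "phi b x - phi b y = (y - x) / ((real b + x) * (real b + y))"
    using bx bp by (simp add: phi_def field_simps)
  then have "\<bar>phi b x - phi b y\<bar> = \<bar>x - y\<bar> / ((real b + x) * (real b + y))"
    using bx bp by (simp add: abs_minus_commute)
  also have "\<dots> \<le> \<bar>x - y\<bar> / (real b * real b)"
    using bx bp by (intro divide_left_mono mult_mono) auto
  finally show ?thesis by (simp add: power2_eq_square)
qed

lemma diam_phi:
  assumes b: "1 \<le> b" and S: "S \<subseteq> {0..1}"
  shows "diameter (phi b ` S) \<le> diameter S / real b ^ 2"
proof (rule diameter_le)
  have bS: "bounded S" using S bounded_subset[OF bounded_closed_interval] by blast
  show "phi b ` S \<noteq> {} \<or> 0 \<le> diameter S / real b ^ 2" using diameter_ge_0[OF bS] by simp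
  fix u v assume "u \<in> phi b ` S" "v \<in> phi b ` S"
  then obtain x y where xy: "x \<in> S" "y \<in> S" "u = phi b x" "v = phi b y" by auto
  have xy01: "x \<in> {0..1}" "y \<in> {0..1}" using xy S by auto
  have "norm (u - v) \<le> \<bar>x - y\<bar> / real b ^ 2" using phi_lip[OF b xy01] xy by simp
  also have "\<dots> \<le> diameter S / real b ^ 2"
    using diameter_bounded_bound[OF bS xy(1,2)] by (simp add: dist_real_def divide_right_mono)
  finally show "norm (u - v) \<le> diameter S / real b ^ 2" .
qed

lemma cont_scale:
  assumes b: "1 \<le> b" and A: "A \<subseteq> {0..1}" and s: "0 \<le> s"
  shows "cont s (phi b ` A) \<le> ennreal (g s b) * cont s A"
proof (rule ennreal_le_epsilon)
  fix e :: real assume top: "ennreal (g s b) * cont s A < top" and e: "0 < e"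
  have gpos: "0 < g s b" using b by (simp add: g_def)
  have fin: "cont s A < top" using top gpos
    by (metis ennreal_mult_less_top ennreal_neq_top order_less_le top_greatest ennreal_eq_0_iff not_le)
  have "cont s A < cont s A + ennreal (e / g s b)"
    using fin e gpos ennreal_add_left_cancel_less[of "cont s A" 0 "ennreal (e / g s b)"] by simp
  then obtain C where C: "A \<subseteq> (\<Union>n. C n)" "\<And>n. bounded (C n)"
    "(\<Sum>n. ennreal (diameter (C n) powr s)) < cont s A + ennreal (e / g s b)"
    unfolding cont_def[of s A] INF_less_iff by auto
  define D where "D n = phi b ` (C n \<inter> {0..1})" for n
  have cov: "phi b ` A \<subseteq> (\<Union>n. D n)" using C(1) A unfolding D_def by blast
  have bD: "bounded (D n)" for n
  proof -
    have "D n \<subseteq> {0..1}" unfolding D_def phi_def using b by (auto simp: field_simps)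
    then show ?thesis using bounded_subset[OF bounded_closed_interval] by blast
  qed
  have dD: "diameter (D n) powr s \<le> g s b * diameter (C n) powr s" for n
  proof -
    have "diameter (D n) \<le> diameter (C n \<inter> {0..1}) / real b ^ 2"
      unfolding D_def by (rule diam_phi[OF b]) auto
    also have "\<dots> \<le> diameter (C n) / real b ^ 2"
      by (intro divide_right_mono diameter_subset C(2)) auto
    finally have "diameter (D n) powr s \<le> (diameter (C n) / real b ^ 2) powr s"
      using diameter_ge_0[OF bD] s by (intro powr_mono2) auto
    also have "\<dots> = g s b * diameter (C n) powr s"
      using diameter_ge_0[OF C(2)] by (simp add: g_def powr_mult[symmetric] divide_inverse mult.commute)
    finally show ?thesis .
  qed
  have "cont s (phi b ` A) \<le> (\<Sum>n. ennreal (diameter (D n) powr s))"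
    by (rule cont_le[OF cov]) (simp add: bD)
  also have "\<dots> \<le> (\<Sum>n. ennreal (g s b) * ennreal (diameter (C n) powr s))"
    by (intro suminf_le summableI) (simp add: dD ennreal_mult'[symmetric] ennreal_leI g_nonneg)
  also have "\<dots> = ennreal (g s b) * (\<Sum>n. ennreal (diameter (C n) powr s))" by simp
  also have "\<dots> \<le> ennreal (g s b) * (cont s A + ennreal (e / g s b))"
    using C(3) by (intro mult_left_mono) auto
  also have "\<dots> = ennreal (g s b) * cont s A + ennreal e"
    using gpos by (simp add: distrib_left ennreal_mult'[symmetric])
  finally show "cont s (phi b ` A) \<le> ennreal (g s b) * cont s A + ennreal e" .
qed


definition Om :: "real set" where "Om = {x. 0 < x \<and> x < 1 \<and> x \<notin> \<rat>}"

lemma Om_sub: "Om \<subseteq> {0..1}" by (auto simp: Om_def)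

lemma gauss_Om: assumes "x \<in> Om" shows "gauss_map x \<in> Om"
proof -
  have x: "0 < x" "x < 1" "x \<notin> \<rat>" using assms by (auto simp: Om_def)
  have nq: "1 / x \<notin> \<rat>"
  proof
    assume "1 / x \<in> \<rat>"
    then have "1 / (1 / x) \<in> \<rat>" by (rule Rats_divide[OF Rats_1])
    then show False using x by simp
  qed
  have nz: "1 / x \<notin> \<int>" using nq Ints_subset_Rats by blast
  have "frac (1 / x) \<notin> \<rat>"
  proof
    assume "frac (1 / x) \<in> \<rat>"
    then have "frac (1 / x) + of_int \<lfloor>1 / x\<rfloor> \<in> \<rat>" by (intro Rats_add) auto
    then show False using nq by (simp add: frac_def)
  qed
  moreover have "0 < frac (1 / x)" using nz frac_ge_0[of "1/x"] frac_eq_0_iff[of "1/x"] by linarith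
  ultimately show ?thesis by (simp add: Om_def gauss_map_def frac_lt_1)
qed

lemma cf_a_1: "cf_a 1 x = nat \<lfloor>1 / x\<rfloor>" by (simp add: cf_a_def)

lemma cf_a_Suc: assumes "1 \<le> n" shows "cf_a (Suc n) x = cf_a n (gauss_map x)"
proof -
  obtain k where k: "n = Suc k" using assms by (cases n) auto
  show ?thesis unfolding cf_a_def k by (simp add: funpow_Suc_right del: funpow.simps)
qed

lemma cf_a_1_ge: assumes "x \<in> Om" shows "1 \<le> cf_a 1 x"
proof -
  have x: "0 < x" "x < 1" using assms by (auto simp: Om_def)
  then have "1 < 1 / x" by simp
  then have "1 \<le> \<lfloor>1 / x\<rfloor>" by linarith
  then show ?thesis unfolding cf_a_1 by linarith
qed

lemma phi_decomp: assumes "x \<in> Om" shows "x = phi (cf_a 1 x) (gauss_map x)"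
proof -
  have x: "0 < x" "x < 1" using assms by (auto simp: Om_def)
  then have "1 < 1 / x" by simp
  then have "0 \<le> \<lfloor>1 / x\<rfloor>" by linarith
  then have "real (cf_a 1 x) = of_int \<lfloor>1 / x\<rfloor>" unfolding cf_a_1 by simp
  then have "real (cf_a 1 x) + gauss_map x = 1 / x" by (simp add: gauss_map_def frac_def)
  then show ?thesis using x by (simp add: phi_def)
qed

definition Cyl :: "nat \<Rightarrow> (nat \<Rightarrow> nat) \<Rightarrow> real set" where
  "Cyl m q = {x \<in> Om. \<forall>i<m. cf_a (Suc i) x = q i}"

lemma cont_cyl: assumes s: "0 \<le> s" shows "cont s (Cyl m q) \<le> ennreal (\<Prod>i<m. g s (q i))"
proof (induction m arbitrary: q)
  case 0
  have "cont s (Cyl 0 q) \<le> cont s {0..1}" by (rule cont_mono) (use Om_sub in \<open>auto simp: Cyl_def\<close>)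
  also have "\<dots> \<le> ennreal (diameter {0..1::real} powr s)" by (rule cont_single) auto
  finally show ?case by simp
next
  case (Suc m)
  show ?case
  proof (cases "q 0 = 0")
    case True
    have "Cyl (Suc m) q = {}" using cf_a_1_ge True by (force simp: Cyl_def)
    then show ?thesis by simp
  next
    case False
    have sub: "Cyl (Suc m) q \<subseteq> phi (q 0) ` Cyl m (\<lambda>i. q (Suc i))"
    proof
      fix x assume x: "x \<in> Cyl (Suc m) q"
      then have xO: "x \<in> Om" and q: "\<And>i. i < Suc m \<Longrightarrow> cf_a (Suc i) x = q i" by (auto simp: Cyl_def)
      have "cf_a (Suc i) (gauss_map x) = q (Suc i)" if "i < m" for i
        using q[of "Suc i"] cf_a_Suc[of "Suc i" x] that by simp
      then have "gauss_map x \<in> Cyl m (\<lambda>i. q (Suc i))"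
        using gauss_Om[OF xO] by (auto simp: Cyl_def)
      moreover have "x = phi (q 0) (gauss_map x)" using phi_decomp[OF xO] q[of 0] by simp
      ultimately show "x \<in> phi (q 0) ` Cyl m (\<lambda>i. q (Suc i))" by blast
    qed
    have "cont s (Cyl (Suc m) q) \<le> cont s (phi (q 0) ` Cyl m (\<lambda>i. q (Suc i)))" by (rule cont_mono[OF sub])
    also have "\<dots> \<le> ennreal (g s (q 0)) * cont s (Cyl m (\<lambda>i. q (Suc i)))"
      using False s Om_sub by (intro cont_scale) (auto simp: Cyl_def)
    also have "\<dots> \<le> ennreal (g s (q 0)) * ennreal (\<Prod>i<m. g s (q (Suc i)))"
      by (intro mult_left_mono Suc.IH) auto
    also have "\<dots> = ennreal (\<Prod>i<Suc m. g s (q i))"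
      unfolding prod.lessThan_Suc_shift
      by (rule ennreal_mult[symmetric]) (auto simp: g_nonneg prod_nonneg)
    finally show ?thesis .
  qed
qed

definition inc :: "real \<Rightarrow> bool" where "inc x \<longleftrightarrow> (\<forall>i\<ge>1. cf_a i x < cf_a (Suc i) x)"

lemma inc_mono: assumes "inc x" "1 \<le> i" "i < j" shows "cf_a i x < cf_a j x"
  using assms(3)
proof (induction j)
  case 0 then show ?case by simp
next
  case (Suc j)
  show ?case
  proof (cases "i = j")
    case True then show ?thesis using assms unfolding inc_def by auto
  next
    case False
    then have "cf_a i x < cf_a j x" using Suc by auto
    also have "\<dots> < cf_a (Suc j) x" using assms Suc.prems False unfolding inc_def by auto
    finally show ?thesis .
  qed
qed

definition Q :: "nat \<Rightarrow> nat \<Rightarrow> nat \<Rightarrow> nat \<Rightarrow> real set" where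
  "Q m k c a = {x \<in> Om. inc x \<and> c < cf_a 1 x \<and> cf_a k x = a \<and> cf_AP x k m}"

lemma Q_step: assumes k: "1 \<le> k"
  shows "Q m (Suc k) c a \<subseteq> (\<Union>b\<in>{c<..<a}. phi b ` Q m k b a)"
proof
  fix x assume "x \<in> Q m (Suc k) c a"
  then have xO: "x \<in> Om" and inc: "inc x" and c: "c < cf_a 1 x" and a: "cf_a (Suc k) x = a"
    and ap: "cf_AP x (Suc k) m" by (auto simp: Q_def)
  define y where "y = gauss_map x"
  define b where "b = cf_a 1 x"
  have sh: "\<And>i. 1 \<le> i \<Longrightarrow> cf_a i y = cf_a (Suc i) x" using cf_a_Suc y_def by simp
  have yO: "y \<in> Om" using gauss_Om[OF xO] y_def by simp
  have incy: "inc y" using inc unfolding inc_def by (simp add: sh)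
  have "cf_a 1 y = cf_a 2 x" using sh[of 1] by (simp add: numeral_2_eq_2)
  then have by1: "b < cf_a 1 y" using inc unfolding inc_def b_def by (simp add: numeral_2_eq_2)
  have ya: "cf_a k y = a" using sh[OF k] a by simp
  have apy: "cf_AP y k m" using ap k unfolding cf_AP_def by (simp add: sh)
  have "y \<in> Q m k b a" using yO incy by1 ya apy by (simp add: Q_def)
  moreover have "x = phi b y" using phi_decomp[OF xO] by (simp add: b_def y_def)
  moreover have "b < a" using inc_mono[OF inc, of 1 "Suc k"] k a b_def by simp
  then have "b \<in> {c<..<a}" using c b_def by simp
  ultimately show "x \<in> (\<Union>b\<in>{c<..<a}. phi b ` Q m k b a)" by blast
qed


lemma cont_Un: "cont s (A \<union> B) \<le> cont s A + cont s B"
proof -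
  let ?F = "\<lambda>k::nat. if k = 0 then A else if k = 1 then B else {}"
  have "A \<union> B = (\<Union>k. ?F k)" by (auto split: if_splits)
  then have "cont s (A \<union> B) \<le> (\<Sum>k. cont s (?F k))" using cont_UN[of s ?F] by simp
  also have "(\<Sum>k. cont s (?F k)) = (\<Sum>k\<in>{0,1}. cont s (?F k))"
    by (rule suminf_finite) auto
  finally show ?thesis by simp
qed

lemma cont_finUN: assumes "finite F" shows "cont s (\<Union>b\<in>F. A b) \<le> (\<Sum>b\<in>F. cont s (A b))"
  using assms
proof (induction F rule: finite_induct)
  case empty then show ?case by simp
next
  case (insert x F)
  have "cont s (\<Union>b\<in>insert x F. A b) = cont s (A x \<union> (\<Union>b\<in>F. A b))" by simp
  also have "\<dots> \<le> cont s (A x) + cont s (\<Union>b\<in>F. A b)" by (rule cont_Un)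
  also have "\<dots> \<le> cont s (A x) + (\<Sum>b\<in>F. cont s (A b))" using insert.IH by (rule add_left_mono)
  finally show ?case using insert by simp
qed

definition S :: "real \<Rightarrow> nat \<Rightarrow> nat \<Rightarrow> real" where "S s c a = (\<Sum>b\<in>{c<..<a}. g s b)"

lemma S_nonneg: "0 \<le> S s c a" by (simp add: S_def sum_nonneg g_nonneg)

lemma bern: assumes "0 \<le> (y::real)" "0 \<le> h"
  shows "y ^ Suc k + real (Suc k) * h * y ^ k \<le> (y + h) ^ Suc k"
proof (induction k)
  case 0 then show ?case by simp
next
  case (Suc k)
  have "y ^ Suc (Suc k) + real (Suc (Suc k)) * h * y ^ Suc k
      \<le> (y + h) * (y ^ Suc k + real (Suc k) * h * y ^ k)"
    using assms by (simp add: algebra_simps)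
  also have "\<dots> \<le> (y + h) * (y + h) ^ Suc k" using Suc assms by (intro mult_left_mono) auto
  finally show ?case by simp
qed

lemma R2: "(\<Sum>b\<in>{c<..<a}. g s b * S s b a ^ k) \<le> S s c a ^ Suc k / real (Suc k)"
proof -
  have "\<forall>c. a - c = d \<longrightarrow> (\<Sum>b\<in>{c<..<a}. g s b * S s b a ^ k) \<le> S s c a ^ Suc k / real (Suc k)" for d
  proof (induction d)
    case 0
    show ?case by (auto simp: S_def)
  next
    case (Suc d)
    show ?case
    proof (intro allI impI)
      fix c assume cd: "a - c = Suc d"
      show "(\<Sum>b\<in>{c<..<a}. g s b * S s b a ^ k) \<le> S s c a ^ Suc k / real (Suc k)"
      proof (cases "Suc c < a")
        case False
        then have "{c<..<a} = {}" by auto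
        then show ?thesis by (simp add: S_def)
      next
        case True
        have split: "{c<..<a} = insert (Suc c) {Suc c<..<a}" using True by auto
        let ?y = "S s (Suc c) a" and ?h = "g s (Suc c)"
        have Sc: "S s c a = ?h + ?y" unfolding S_def split by simp
        have IH: "(\<Sum>b\<in>{Suc c<..<a}. g s b * S s b a ^ k) \<le> ?y ^ Suc k / real (Suc k)"
          using Suc.IH cd by auto
        have "(\<Sum>b\<in>{c<..<a}. g s b * S s b a ^ k) = ?h * ?y ^ k + (\<Sum>b\<in>{Suc c<..<a}. g s b * S s b a ^ k)"
          unfolding split by simp
        also have "\<dots> \<le> ?h * ?y ^ k + ?y ^ Suc k / real (Suc k)" using IH by simp
        also have "\<dots> = (?y ^ Suc k + real (Suc k) * ?h * ?y ^ k) / real (Suc k)"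
          by (simp add: field_simps)
        also have "\<dots> \<le> (?y + ?h) ^ Suc k / real (Suc k)"
          by (intro divide_right_mono bern S_nonneg g_nonneg) auto
        finally show ?thesis using Sc by (simp add: add.commute)
      qed
    qed
  qed
  then show ?thesis by blast
qed

lemma Q_bound: assumes s: "0 \<le> s"
  shows "cont s (Q m (Suc k) c a) \<le> ennreal (S s c a ^ k / fact k) * cont s (Q m 1 0 a)"
proof (induction k arbitrary: c)
  case 0
  have "Q m 1 c a \<subseteq> Q m 1 0 a" by (auto simp: Q_def)
  then show ?case using cont_mono by simp
next
  case (Suc k)
  let ?B = "cont s (Q m 1 0 a)"
  have "cont s (Q m (Suc (Suc k)) c a) \<le> cont s (\<Union>b\<in>{c<..<a}. phi b ` Q m (Suc k) b a)"
    by (intro cont_mono Q_step) auto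
  also have "\<dots> \<le> (\<Sum>b\<in>{c<..<a}. cont s (phi b ` Q m (Suc k) b a))" by (intro cont_finUN) auto
  also have "\<dots> \<le> (\<Sum>b\<in>{c<..<a}. ennreal (g s b) * (ennreal (S s b a ^ k / fact k) * ?B))"
  proof (intro sum_mono)
    fix b assume b: "b \<in> {c<..<a}"
    have "cont s (phi b ` Q m (Suc k) b a) \<le> ennreal (g s b) * cont s (Q m (Suc k) b a)"
      using b s Om_sub by (intro cont_scale) (auto simp: Q_def)
    also have "\<dots> \<le> ennreal (g s b) * (ennreal (S s b a ^ k / fact k) * ?B)"
      by (intro mult_left_mono Suc.IH) auto
    finally show "cont s (phi b ` Q m (Suc k) b a) \<le> ennreal (g s b) * (ennreal (S s b a ^ k / fact k) * ?B)" .
  qed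
  also have "\<dots> = ennreal (\<Sum>b\<in>{c<..<a}. g s b * (S s b a ^ k / fact k)) * ?B"
  proof -
    have e: "ennreal (g s b) * (ennreal (S s b a ^ k / fact k) * ?B) = ennreal (g s b * (S s b a ^ k / fact k)) * ?B" for b
    proof -
      have "ennreal (g s b * (S s b a ^ k / fact k)) = ennreal (g s b) * ennreal (S s b a ^ k / fact k)"
        by (rule ennreal_mult) (auto simp: g_nonneg S_nonneg)
      then show ?thesis by (simp only: mult.assoc)
    qed
    have "(\<Sum>b\<in>{c<..<a}. ennreal (g s b) * (ennreal (S s b a ^ k / fact k) * ?B))
        = (\<Sum>b\<in>{c<..<a}. ennreal (g s b * (S s b a ^ k / fact k))) * ?B"
      unfolding e by (rule sum_distrib_right[symmetric])
    also have "\<dots> = ennreal (\<Sum>b\<in>{c<..<a}. g s b * (S s b a ^ k / fact k)) * ?B"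
      by (subst sum_ennreal) (auto simp: g_nonneg S_nonneg)
    finally show ?thesis .
  qed
  also have "\<dots> \<le> ennreal (S s c a ^ Suc k / fact (Suc k)) * ?B"
  proof (intro mult_right_mono ennreal_leI)
    have "(\<Sum>b\<in>{c<..<a}. g s b * (S s b a ^ k / fact k)) = (\<Sum>b\<in>{c<..<a}. g s b * S s b a ^ k) / fact k"
      by (simp add: sum_divide_distrib)
    also have "\<dots> \<le> (S s c a ^ Suc k / real (Suc k)) / fact k"
      by (intro divide_right_mono R2) auto
    also have "\<dots> = S s c a ^ Suc k / fact (Suc k)" by (simp add: field_simps)
    finally show "(\<Sum>b\<in>{c<..<a}. g s b * (S s b a ^ k / fact k)) \<le> S s c a ^ Suc k / fact (Suc k)" .
  qed auto
  finally show ?case .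
qed


definition Fn :: "(nat \<Rightarrow> nat) \<Rightarrow> nat \<Rightarrow> real set" where
  "Fn \<nu> n = {x \<in> J_set. cf_AP x n (\<nu> n)}"

lemma J_Om: assumes "x \<in> J_set" shows "x \<in> Om" "inc x"
  using assms by (auto simp: J_set_def Om_def inc_def)

lemma Fn_sub: assumes "1 \<le> n" shows "Fn \<nu> n \<subseteq> (\<Union>a. Q (\<nu> n) n 0 a)"
proof
  fix x assume x: "x \<in> Fn \<nu> n"
  then have "x \<in> J_set" "cf_AP x n (\<nu> n)" by (auto simp: Fn_def)
  then have "x \<in> Q (\<nu> n) n 0 (cf_a n x)"
    using J_Om cf_a_1_ge[of x] by (auto simp: Q_def)
  then show "x \<in> (\<Union>a. Q (\<nu> n) n 0 a)" by blast
qed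

lemma cont_Fn: assumes n: "1 \<le> n" and s: "0 \<le> s"
  shows "cont s (Fn \<nu> n) \<le> (\<Sum>a. ennreal (S s 0 a ^ (n - 1) / fact (n - 1)) * cont s (Q (\<nu> n) 1 0 a))"
proof -
  have "cont s (Fn \<nu> n) \<le> cont s (\<Union>a. Q (\<nu> n) n 0 a)" by (rule cont_mono[OF Fn_sub[OF n]])
  also have "\<dots> \<le> (\<Sum>a. cont s (Q (\<nu> n) n 0 a))" by (rule cont_UN)
  also have "\<dots> \<le> (\<Sum>a. ennreal (S s 0 a ^ (n - 1) / fact (n - 1)) * cont s (Q (\<nu> n) 1 0 a))"
  proof (intro suminf_le summableI)
    fix a
    have "n = Suc (n - 1)" using n by simp
    then show "cont s (Q (\<nu> n) n 0 a) \<le> ennreal (S s 0 a ^ (n - 1) / fact (n - 1)) * cont s (Q (\<nu> n) 1 0 a)"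
      using Q_bound[OF s, of "\<nu> n" "n - 1" 0 a] by simp
  qed
  finally show ?thesis .
qed

lemma base0: assumes s: "0 \<le> s" shows "cont s (Q m 1 0 a) \<le> ennreal (g s a)"
proof -
  have "Q m 1 0 a \<subseteq> Cyl 1 (\<lambda>_. a)" by (auto simp: Q_def Cyl_def)
  then have "cont s (Q m 1 0 a) \<le> cont s (Cyl 1 (\<lambda>_. a))" by (rule cont_mono)
  also have "\<dots> \<le> ennreal (g s a)" using cont_cyl[OF s, of 1 "\<lambda>_. a"] by simp
  finally show ?thesis .
qed

lemma basepos: assumes s: "0 \<le> s" and m: "2 \<le> m"
  shows "cont s (Q m 1 0 a) \<le> (\<Sum>d. ennreal (\<Prod>i<m. g s (a + i * Suc d)))"
proof -
  have "Q m 1 0 a \<subseteq> (\<Union>d. Cyl m (\<lambda>i. a + i * Suc d))"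
  proof
    fix x assume "x \<in> Q m 1 0 a"
    then have xO: "x \<in> Om" and inc: "inc x" and a: "cf_a 1 x = a" and ap: "cf_AP x 1 m"
      by (auto simp: Q_def)
    obtain D :: int where D: "\<And>i. i < m \<Longrightarrow> int (cf_a (1 + i) x) = int (cf_a 1 x) + int i * D"
      using ap unfolding cf_AP_def by blast
    have "int (cf_a 2 x) = int a + D" using D[of 1] m a by (simp add: numeral_2_eq_2)
    moreover have "cf_a 1 x < cf_a 2 x" using inc unfolding inc_def by (simp add: numeral_2_eq_2)
    ultimately have D1: "1 \<le> D" using a by linarith
    define d where "d = nat (D - 1)"
    have Dd: "D = int (Suc d)" using D1 d_def by simp
    have "cf_a (Suc i) x = a + i * Suc d" if "i < m" for i
    proof -
      have "int (cf_a (Suc i) x) = int (a + i * Suc d)" using D[OF that] a Dd by (simp add: algebra_simps)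
      then show ?thesis by linarith
    qed
    then have "x \<in> Cyl m (\<lambda>i. a + i * Suc d)" using xO by (simp add: Cyl_def)
    then show "x \<in> (\<Union>d. Cyl m (\<lambda>i. a + i * Suc d))" by blast
  qed
  then have "cont s (Q m 1 0 a) \<le> cont s (\<Union>d. Cyl m (\<lambda>i. a + i * Suc d))" by (rule cont_mono)
  also have "\<dots> \<le> (\<Sum>d. cont s (Cyl m (\<lambda>i. a + i * Suc d)))" by (rule cont_UN)
  also have "\<dots> \<le> (\<Sum>d. ennreal (\<Prod>i<m. g s (a + i * Suc d)))"
    by (intro suminf_le summableI cont_cyl[OF s])
  finally show ?thesis .
qed


lemma g_eq: "g s b = real b powr (-2 * s)"
proof (cases "b = 0")
  case True then show ?thesis by (simp add: g_def)
next
  case False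
  then have "0 < real b" by simp
  then show ?thesis
    by (simp add: g_def powr_divide powr_minus_divide powr_powr[symmetric] powr_realpow'[symmetric] power2_eq_square mult.commute powr_mult)
qed

lemma g_anti: assumes "1 \<le> a" "a \<le> b" "0 \<le> s" shows "g s b \<le> g s a"
  unfolding g_eq using assms by (intro powr_mono2') auto

lemma g1_eq: "g 1 n = inverse (real n ^ 2)"
  by (simp add: g_def divide_inverse)

lemma g1_summable: "summable (g 1)"
  unfolding g1_eq[abs_def] using inverse_power_summable[of 2] by simp

lemma key_mvt: assumes s: "0 < s" "s < 1/2" and b: "1 \<le> b"
  shows "g s b \<le> (real b powr (1 - 2 * s) - (real b - 1) powr (1 - 2 * s)) / (1 - 2 * s)"
proof (cases "b = 1")
  case True
  have "1 \<le> 1 / (1 - 2 * s)" using s by (simp add: field_simps)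
  then show ?thesis using True by (simp add: g_def power_0_left)
next
  case False
  let ?p = "1 - 2 * s"
  have b2: "2 \<le> real b" using b False by simp
  have "\<exists>l z. real b - 1 < z \<and> z < real b \<and> DERIV (\<lambda>x. x powr ?p) z :> l \<and>
      real b powr ?p - (real b - 1) powr ?p = (real b - (real b - 1)) * l"
  proof (rule MVT)
    show "continuous_on {real b - 1..real b} (\<lambda>x. x powr ?p)"
      using b2 by (intro continuous_intros) auto
    show "(\<lambda>x. x powr ?p) differentiable (at x)" if "real b - 1 < x" "x < real b" for x
      using has_real_derivative_powr[of x ?p] that b2 real_differentiable_def by force
  qed simp
  then obtain l z where z: "real b - 1 < z" "z < real b" and D: "DERIV (\<lambda>x. x powr ?p) z :> l"
    and eq: "real b powr ?p - (real b - 1) powr ?p = l" by auto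
  have zp: "0 < z" using z b2 by simp
  have "l = ?p * z powr (?p - 1)"
    using DERIV_unique[OF D has_real_derivative_powr[OF zp]] .
  then have "real b powr ?p - (real b - 1) powr ?p = ?p * z powr (-2 * s)" using eq by simp
  moreover have "real b powr (-2 * s) \<le> z powr (-2 * s)"
    using z zp s by (intro powr_mono2') auto
  ultimately have "?p * g s b \<le> real b powr ?p - (real b - 1) powr ?p"
    using s by (simp add: g_eq mult_left_mono)
  then show ?thesis using s by (simp add: field_simps)
qed

lemma S_bound: assumes s: "0 < s" "s < 1/2"
  shows "S s 0 a \<le> real a powr (1 - 2 * s) / (1 - 2 * s)"
proof -
  let ?p = "1 - 2 * s"
  have p: "0 < ?p" using s by simp
  have main: "S s 0 a \<le> (real a - 1) powr ?p / ?p" if "1 \<le> a" for a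
    using that
  proof (induction a rule: dec_induct)
    case base
    have "{0<..<Suc 0} = ({}::nat set)" by auto
    then show ?case by (simp add: S_def)
  next
    case (step a)
    have "{0<..<Suc a} = insert a {0<..<a}" using step by auto
    then have "S s 0 (Suc a) = g s a + S s 0 a" by (simp add: S_def)
    also have "\<dots> \<le> (real a powr ?p - (real a - 1) powr ?p) / ?p + (real a - 1) powr ?p / ?p"
      using key_mvt[OF s step(1)] step(3) by linarith
    also have "\<dots> = (real a powr ?p - (real a - 1) powr ?p + (real a - 1) powr ?p) / ?p"
      by (simp only: add_divide_distrib)
    also have "\<dots> = (real (Suc a) - 1) powr ?p / ?p" by simp
    finally show ?case .
  qed
  show ?thesis
  proof (cases "a = 0")
    case True then show ?thesis by (simp add: S_def)
  next
    case False
    then have "S s 0 a \<le> (real a - 1) powr ?p / ?p" using main by simp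
    also have "\<dots> \<le> real a powr ?p / ?p" using False p by (intro divide_right_mono powr_mono2) auto
    finally show ?thesis .
  qed
qed

lemma pointwise: assumes s: "0 < s" "s < 1/2" and mK: "K < m"
  and E: "(1 - 2 * s) * real (n - 1) - 2 * s * real (m - K) \<le> -2"
  shows "S s 0 a ^ (n - 1) * g s a ^ (m - K) \<le> (1 / (1 - 2 * s)) ^ (n - 1) * g 1 a"
proof (cases "a = 0")
  case True
  have "m - K \<noteq> 0" using mK by simp
  then show ?thesis using True by (simp add: g_def power_0_left)
next
  case False
  let ?p = "1 - 2 * s"
  have a1: "1 \<le> real a" using False by simp
  have "S s 0 a ^ (n - 1) \<le> (real a powr ?p / ?p) ^ (n - 1)"
    by (intro power_mono S_bound[OF s] S_nonneg)
  also have "\<dots> = (real a powr ?p) ^ (n - 1) / ?p ^ (n - 1)" by (rule power_divide)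
  also have "\<dots> = (1 / ?p) ^ (n - 1) * real a powr (real (n - 1) * ?p)"
    using a1 by (simp add: powr_power power_one_over)
  finally have A: "S s 0 a ^ (n - 1) \<le> (1 / ?p) ^ (n - 1) * real a powr (real (n - 1) * ?p)" .
  have B: "g s a ^ (m - K) = real a powr (real (m - K) * (-2 * s))"
    using a1 by (simp add: g_eq powr_power)
  have "S s 0 a ^ (n - 1) * g s a ^ (m - K)
      \<le> (1 / ?p) ^ (n - 1) * real a powr (real (n - 1) * ?p) * real a powr (real (m - K) * (-2 * s))"
    unfolding B by (intro mult_right_mono A) auto
  also have "\<dots> = (1 / ?p) ^ (n - 1) * real a powr (?p * real (n - 1) - 2 * s * real (m - K))"
    by (simp add: powr_add[symmetric] algebra_simps)
  also have "\<dots> \<le> (1 / ?p) ^ (n - 1) * real a powr (-2)"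
    using E a1 s by (intro mult_left_mono powr_mono) auto
  also have "real a powr (-2) = g 1 a" by (simp add: g_eq)
  finally show ?thesis .
qed

lemma tail_prod: assumes s: "0 \<le> s" and K: "2 \<le> 2 * s * real K" and mK: "K < m" and a: "1 \<le> a"
  shows "(\<Prod>i<m. g s (a + i * Suc d)) \<le> g s a ^ (m - K) * g 1 (Suc d)"
proof -
  have sub: "{1..K} \<subseteq> {..<m}" using mK by auto
  have "(\<Prod>i<m. g s (a + i * Suc d)) = (\<Prod>i\<in>{..<m} - {1..K}. g s (a + i * Suc d)) * (\<Prod>i\<in>{1..K}. g s (a + i * Suc d))"
    by (rule prod.subset_diff[OF sub]) auto
  also have "\<dots> \<le> (\<Prod>i\<in>{..<m} - {1..K}. g s a) * (\<Prod>i\<in>{1..K}. g s (Suc d))"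
  proof (intro mult_mono prod_mono conjI prod_nonneg g_nonneg)
    fix i assume "i \<in> {..<m} - {1..K}"
    show "g s (a + i * Suc d) \<le> g s a" using a s by (intro g_anti) auto
  next
    fix i assume "i \<in> {1..K}"
    then have "1 * Suc d \<le> i * Suc d" by (intro mult_le_mono1) auto
    then have "Suc d \<le> a + i * Suc d" by (metis mult_1 trans_le_add2)
    then show "g s (a + i * Suc d) \<le> g s (Suc d)" using s by (intro g_anti) auto
  qed
  also have "\<dots> = g s a ^ (m - K) * g s (Suc d) ^ K"
  proof -
    have "card ({..<m} - {1..K}) = m - K" using sub by (simp add: card_Diff_subset)
    then show ?thesis by simp
  qed
  also have "\<dots> \<le> g s a ^ (m - K) * g 1 (Suc d)"
  proof (intro mult_left_mono zero_le_power g_nonneg)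
    have "g s (Suc d) ^ K = real (Suc d) powr (real K * (-2 * s))"
      by (simp add: g_eq powr_power)
    also have "\<dots> \<le> real (Suc d) powr (-2)"
      using K by (intro powr_mono) (auto simp: algebra_simps)
    also have "\<dots> = g 1 (Suc d)" by (simp add: g_eq)
    finally show "g s (Suc d) ^ K \<le> g 1 (Suc d)" .
  qed
  finally show ?thesis .
qed


lemma Q_zero: "Q m 1 0 0 = {}"
  using cf_a_1_ge by (force simp: Q_def)

lemma basebound: assumes s: "0 \<le> s" and K: "2 \<le> 2 * s * real K" and mK: "K < m" and K1: "1 \<le> K"
  shows "cont s (Q m 1 0 a) \<le> ennreal (g s a ^ (m - K) * (\<Sum>d. g 1 (Suc d)))"
proof (cases "a = 0")
  case True then show ?thesis using Q_zero[of m] by simp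
next
  case False
  have sm: "summable (\<lambda>d. g 1 (Suc d))" using g1_summable by (simp add: summable_Suc_iff)
  have "cont s (Q m 1 0 a) \<le> (\<Sum>d. ennreal (\<Prod>i<m. g s (a + i * Suc d)))"
    using mK K1 by (intro basepos s) auto
  also have "\<dots> \<le> (\<Sum>d. ennreal (g s a ^ (m - K) * g 1 (Suc d)))"
    using False by (intro suminf_le summableI ennreal_leI tail_prod[OF s K mK]) auto
  also have "\<dots> = ennreal (\<Sum>d. g s a ^ (m - K) * g 1 (Suc d))"
    by (intro suminf_ennreal2 summable_mult sm) (simp add: g_nonneg)
  also have "(\<Sum>d. g s a ^ (m - K) * g 1 (Suc d)) = g s a ^ (m - K) * (\<Sum>d. g 1 (Suc d))"
    by (rule suminf_mult[OF sm])
  finally show ?thesis .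
qed

lemma g_summable: assumes "1/2 < s" shows "summable (g s)"
proof -
  have "summable (\<lambda>n. real n powr (-2 * s))" using assms by (subst summable_real_powr_iff) auto
  then show ?thesis by (simp add: g_eq[abs_def])
qed

lemma Fn_bound_zero: assumes s: "1/2 < s" and n: "1 \<le> n"
  shows "cont s (Fn \<nu> n) \<le> ennreal (suminf (g s) * suminf (g s) ^ (n - 1) / fact (n - 1))"
proof -
  let ?Z = "suminf (g s)"
  have sm: "summable (g s)" by (rule g_summable[OF s])
  have SZ: "S s 0 a \<le> ?Z" for a
    unfolding S_def by (rule sum_le_suminf[OF sm]) (auto simp: g_nonneg)
  have "cont s (Fn \<nu> n) \<le> (\<Sum>a. ennreal (S s 0 a ^ (n - 1) / fact (n - 1)) * cont s (Q (\<nu> n) 1 0 a))"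
    using s by (intro cont_Fn n) auto
  also have "\<dots> \<le> (\<Sum>a. ennreal (?Z ^ (n - 1) / fact (n - 1) * g s a))"
  proof (intro suminf_le summableI)
    fix a
    have "ennreal (S s 0 a ^ (n - 1) / fact (n - 1)) * cont s (Q (\<nu> n) 1 0 a)
        \<le> ennreal (?Z ^ (n - 1) / fact (n - 1)) * ennreal (g s a)"
      using s by (intro mult_mono ennreal_leI divide_right_mono power_mono SZ S_nonneg base0) auto
    also have "\<dots> = ennreal (?Z ^ (n - 1) / fact (n - 1) * g s a)"
      by (rule ennreal_mult[symmetric]) (auto simp: g_nonneg suminf_nonneg[OF sm])
    finally show "ennreal (S s 0 a ^ (n - 1) / fact (n - 1)) * cont s (Q (\<nu> n) 1 0 a)
        \<le> ennreal (?Z ^ (n - 1) / fact (n - 1) * g s a)" .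
  qed
  also have "\<dots> = ennreal (\<Sum>a. ?Z ^ (n - 1) / fact (n - 1) * g s a)"
    by (intro suminf_ennreal2 summable_mult sm) (auto simp: g_nonneg suminf_nonneg[OF sm])
  also have "(\<Sum>a. ?Z ^ (n - 1) / fact (n - 1) * g s a) = ?Z ^ (n - 1) / fact (n - 1) * ?Z"
    by (rule suminf_mult[OF sm])
  finally show ?thesis by (simp add: mult.commute)
qed

lemma Fn_bound_pos: assumes s: "0 < s" "s < 1/2" and K: "2 \<le> 2 * s * real K" and K1: "1 \<le> K"
  and mK: "K < \<nu> n" and n: "1 \<le> n"
  and E: "(1 - 2 * s) * real (n - 1) - 2 * s * real (\<nu> n - K) \<le> -2"
  shows "cont s (Fn \<nu> n) \<le> ennreal ((\<Sum>d. g 1 (Suc d)) * suminf (g 1) * (1 / (1 - 2 * s)) ^ (n - 1) / fact (n - 1))"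
proof -
  let ?Z1 = "\<Sum>d. g 1 (Suc d)" and ?Z2 = "suminf (g 1)" and ?C = "1 / (1 - 2 * s)" and ?m = "\<nu> n"
  have sm1: "summable (\<lambda>d. g 1 (Suc d))" using g1_summable by (simp add: summable_Suc_iff)
  have Z1: "0 \<le> ?Z1" by (intro suminf_nonneg sm1 g_nonneg)
  have C: "0 \<le> ?C" using s by simp
  have "cont s (Fn \<nu> n) \<le> (\<Sum>a. ennreal (S s 0 a ^ (n - 1) / fact (n - 1)) * cont s (Q ?m 1 0 a))"
    using s by (intro cont_Fn n) auto
  also have "\<dots> \<le> (\<Sum>a. ennreal (?Z1 * ?C ^ (n - 1) / fact (n - 1) * g 1 a))"
  proof (intro suminf_le summableI)
    fix a
    have "ennreal (S s 0 a ^ (n - 1) / fact (n - 1)) * cont s (Q ?m 1 0 a)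
        \<le> ennreal (S s 0 a ^ (n - 1) / fact (n - 1)) * ennreal (g s a ^ (?m - K) * ?Z1)"
      using s by (intro mult_left_mono basebound K mK K1) auto
    also have "\<dots> = ennreal ((S s 0 a ^ (n - 1) * g s a ^ (?m - K)) * ?Z1 / fact (n - 1))"
      by (subst ennreal_mult[symmetric]) (auto simp: S_nonneg g_nonneg Z1 mult_ac)
    also have "\<dots> \<le> ennreal ((?C ^ (n - 1) * g 1 a) * ?Z1 / fact (n - 1))"
      by (intro ennreal_leI divide_right_mono mult_right_mono pointwise s mK E Z1) auto
    also have "\<dots> = ennreal (?Z1 * ?C ^ (n - 1) / fact (n - 1) * g 1 a)" by (simp add: mult_ac)
    finally show "ennreal (S s 0 a ^ (n - 1) / fact (n - 1)) * cont s (Q ?m 1 0 a)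
        \<le> ennreal (?Z1 * ?C ^ (n - 1) / fact (n - 1) * g 1 a)" .
  qed
  also have "\<dots> = ennreal (\<Sum>a. ?Z1 * ?C ^ (n - 1) / fact (n - 1) * g 1 a)"
    by (intro suminf_ennreal2 summable_mult g1_summable)
      (use s in \<open>auto simp: g_nonneg Z1 C intro!: divide_nonneg_nonneg mult_nonneg_nonneg zero_le_power\<close>)
  also have "(\<Sum>a. ?Z1 * ?C ^ (n - 1) / fact (n - 1) * g 1 a) = ?Z1 * ?C ^ (n - 1) / fact (n - 1) * ?Z2"
    by (rule suminf_mult[OF g1_summable])
  finally show ?thesis by (simp add: mult_ac)
qed


lemma bridge: assumes A: "cont s A = 0" and s: "0 < s" shows "hausdorff_measure s A = 0"
proof -
  have "hausdorff_content s \<delta> A = 0" if \<delta>: "0 < \<delta>" for \<delta>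
  proof -
    have small: "hausdorff_content s \<delta> A \<le> ennreal e" if e: "0 < e" "e < \<delta> powr s" for e
    proof -
      have "cont s A < ennreal e" using A e by simp
      then obtain C where C: "A \<subseteq> (\<Union>n. C n)" "\<And>n. bounded (C n)"
        "(\<Sum>n. ennreal (diameter (C n) powr s)) < ennreal e"
        unfolding cont_def INF_less_iff by auto
      have "diameter (C n) \<le> \<delta>" for n
      proof (rule ccontr)
        assume "\<not> diameter (C n) \<le> \<delta>"
        then have "\<delta> powr s \<le> diameter (C n) powr s" using \<delta> s by (intro powr_mono2) auto
        moreover have "ennreal (diameter (C n) powr s) < ennreal e" using ennreal_suminf_lessD[OF C(3)] .
        then have "diameter (C n) powr s < e" by (subst (asm) ennreal_less_iff) auto
        ultimately show False using e by simp
      qed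
      then have "hausdorff_content s \<delta> A \<le> (\<Sum>n. ennreal (diameter (C n) powr s))"
        unfolding hausdorff_content_def using C by (intro INF_lower) auto
      then show ?thesis using C(3) by simp
    qed
    have "hausdorff_content s \<delta> A \<le> 0"
    proof (rule ennreal_le_epsilon)
      fix e :: real assume e: "0 < e"
      let ?e = "min e (\<delta> powr s / 2)"
      have dp: "0 < \<delta> powr s" using \<delta> by simp
      have "hausdorff_content s \<delta> A \<le> ennreal ?e" using e dp by (intro small) (auto simp: min_less_iff_disj)
      also have "\<dots> \<le> ennreal e" by (intro ennreal_leI) auto
      finally show "hausdorff_content s \<delta> A \<le> 0 + ennreal e" by simp
    qed
    then show ?thesis by simp
  qed
  then show ?thesis unfolding hausdorff_measure_def by simp
qed

lemma hm_zero: assumes s: "0 < s" and C: "0 \<le> C" and K: "0 \<le> K"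
  and bd: "\<And>n. Nz \<le> n \<Longrightarrow> cont s (Fn \<nu> n) \<le> ennreal (K * C ^ (n - 1) / fact (n - 1))"
  shows "hausdorff_measure s (F_set \<nu>) = 0"
proof -
  define b where "b n = K * C ^ n / fact n" for n
  have "summable (\<lambda>n. K * (inverse (fact n) * C ^ n))" by (intro summable_mult summable_exp)
  then have sb: "summable b" unfolding b_def by (simp add: field_simps)
  have b0: "0 \<le> b n" for n using C K by (simp add: b_def)
  have "cont s (F_set \<nu>) \<le> 0"
  proof (rule ennreal_le_epsilon)
    fix r :: real assume r: "0 < r"
    obtain N where N: "\<And>n. N \<le> n \<Longrightarrow> norm (\<Sum>i. b (i + n)) < r"
      using suminf_exist_split[OF r sb] by blast
    define M where "M = max N Nz"
    have cov: "F_set \<nu> \<subseteq> (\<Union>j. Fn \<nu> (j + M + 1))"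
    proof
      fix x assume x: "x \<in> F_set \<nu>"
      then have "infinite {n. n \<ge> 1 \<and> cf_AP x n (\<nu> n)}" "x \<in> J_set" by (auto simp: F_set_def)
      then have "\<forall>m. \<exists>n>m. n \<in> {n. n \<ge> 1 \<and> cf_AP x n (\<nu> n)}"
        using infinite_nat_iff_unbounded by auto
      then obtain n where n: "n > M" "cf_AP x n (\<nu> n)" by auto
      have eq: "(n - M - 1) + M + 1 = n" using n by simp
      have "x \<in> Fn \<nu> n" using n \<open>x \<in> J_set\<close> by (simp add: Fn_def)
      then have "x \<in> Fn \<nu> ((n - M - 1) + M + 1)" by (simp only: eq)
      then show "x \<in> (\<Union>j. Fn \<nu> (j + M + 1))" by blast
    qed
    have "cont s (F_set \<nu>) \<le> cont s (\<Union>j. Fn \<nu> (j + M + 1))" by (rule cont_mono[OF cov])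
    also have "\<dots> \<le> (\<Sum>j. cont s (Fn \<nu> (j + M + 1)))" by (rule cont_UN)
    also have "\<dots> \<le> (\<Sum>j. ennreal (b (j + M)))"
    proof (intro suminf_le summableI)
      fix j
      have "cont s (Fn \<nu> (j + M + 1)) \<le> ennreal (K * C ^ (j + M + 1 - 1) / fact (j + M + 1 - 1))"
        by (rule bd) (simp add: M_def)
      then show "cont s (Fn \<nu> (j + M + 1)) \<le> ennreal (b (j + M))" by (simp add: b_def)
    qed
    also have "\<dots> = ennreal (\<Sum>j. b (j + M))"
      by (intro suminf_ennreal2 b0) (simp add: sb)
    also have "\<dots> \<le> ennreal r"
    proof (intro ennreal_leI)
      have "norm (\<Sum>i. b (i + M)) < r" by (rule N) (simp add: M_def)
      then show "(\<Sum>j. b (j + M)) \<le> r" by simp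
    qed
    finally show "cont s (F_set \<nu>) \<le> 0 + ennreal r" by simp
  qed
  then have "cont s (F_set \<nu>) = 0" by simp
  then show ?thesis using bridge s by blast
qed

lemma zero_case: assumes s: "1/2 < s" shows "hausdorff_measure s (F_set \<nu>) = 0"
proof -
  have Z: "0 \<le> suminf (g s)" by (intro suminf_nonneg g_summable s g_nonneg)
  show ?thesis
    by (rule hm_zero[where Nz = 1 and K = "suminf (g s)" and C = "suminf (g s)"])
       (use s Z Fn_bound_zero[OF s] in auto)
qed

lemma pos_case: assumes \<beta>: "0 < \<beta>" and s1: "1 / (2 * (1 + \<beta>)) < s" and s2: "s < 1/2"
  and N1: "\<And>n. N1 \<le> n \<Longrightarrow> \<beta> * real n \<le> real (\<nu> n)"
  shows "hausdorff_measure s (F_set \<nu>) = 0"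
proof -
  have s0: "0 < s" using s1 \<beta> by (smt (verit) divide_pos_pos)
  define K0 where "K0 = nat \<lceil>1 / s\<rceil>"
  have K0r: "1 / s \<le> real K0" unfolding K0_def by linarith
  have "1 < 1 / s" using s0 s2 by (simp add: field_simps)
  then have "1 < real K0" using K0r by linarith
  then have K1: "1 \<le> K0" by simp
  have K: "2 \<le> 2 * s * real K0"
  proof -
    have "1 \<le> s * real K0" using K0r s0 by (simp add: field_simps)
    then show ?thesis by simp
  qed
  define \<eta> where "\<eta> = 2 * s * (1 + \<beta>) - 1"
  have \<eta>: "0 < \<eta>"
  proof -
    have "1 < s * (2 * (1 + \<beta>))" using s1 \<beta> by (simp add: field_simps)
    then show ?thesis unfolding \<eta>_def by (simp add: algebra_simps)
  qed
  define X where "X = 1 + 2 * s + 2 * s * real K0"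
  define N0 where "N0 = max (max N1 1) (max (nat \<lceil>X / \<eta>\<rceil>) (nat \<lceil>real K0 / \<beta>\<rceil> + 1))"
  let ?Z1 = "\<Sum>d. g 1 (Suc d)" and ?Z2 = "suminf (g 1)"
  have Z1: "0 \<le> ?Z1" using g1_summable by (intro suminf_nonneg g_nonneg) (simp add: summable_Suc_iff)
  have Z2: "0 \<le> ?Z2" by (intro suminf_nonneg g1_summable g_nonneg)
  show ?thesis
  proof (rule hm_zero[where Nz = N0 and K = "?Z1 * ?Z2" and C = "1 / (1 - 2 * s)"])
    show "0 < s" by (rule s0)
    show "0 \<le> 1 / (1 - 2 * s)" using s2 by simp
    show "0 \<le> ?Z1 * ?Z2" using Z1 Z2 by simp
    fix n assume n: "N0 \<le> n"
    have n1: "1 \<le> n" and nN1: "N1 \<le> n" using n by (auto simp: N0_def)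
    have nX: "X / \<eta> \<le> real n" using n unfolding N0_def by linarith
    have nK: "real K0 / \<beta> < real n" using n unfolding N0_def by linarith
    have bn: "\<beta> * real n \<le> real (\<nu> n)" by (rule N1[OF nN1])
    have "real K0 < \<beta> * real n" using nK \<beta> by (simp add: field_simps)
    then have mK: "K0 < \<nu> n" using bn by linarith
    have nX': "X \<le> \<eta> * real n" using nX \<eta> by (simp add: field_simps)
    have E: "(1 - 2 * s) * real (n - 1) - 2 * s * real (\<nu> n - K0) \<le> -2"
    proof -
      have r1: "real (n - 1) = real n - 1" using n1 by simp
      have r2: "real (\<nu> n - K0) = real (\<nu> n) - real K0" using mK by simp
      have "2 * s * (\<beta> * real n - real K0) \<le> 2 * s * (real (\<nu> n) - real K0)"
        using bn s0 by (intro mult_left_mono) auto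
      moreover have "(1 - 2 * s) * (real n - 1) - 2 * s * (\<beta> * real n - real K0) = - (\<eta> * real n) - 1 + 2 * s + 2 * s * real K0"
        unfolding \<eta>_def by (simp add: algebra_simps)
      ultimately show ?thesis unfolding r1 r2 using nX' unfolding X_def by linarith
    qed
    have "cont s (Fn \<nu> n) \<le> ennreal (?Z1 * ?Z2 * (1 / (1 - 2 * s)) ^ (n - 1) / fact (n - 1))"
      using Fn_bound_pos[where \<nu>=\<nu> and n=n and K=K0 and s=s] s0 s2 K K1 mK n1 E by blast
    then show "cont s (Fn \<nu> n) \<le> ennreal (?Z1 * ?Z2 * (1 / (1 - 2 * s)) ^ (n - 1) / fact (n - 1))" .
  qed
qed


theorem proposition3p1:
  fixes \<nu> :: "nat \<Rightarrow> nat" and \<alpha> :: ereal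
  assumes incr: "\<forall>n\<ge>1. \<nu> n \<le> \<nu> (Suc n)"
    and pos: "\<forall>n\<ge>1. 0 < \<nu> n"
    and alpha: "\<alpha> = liminf (\<lambda>n. ereal (real (\<nu> n) / real n))"
  shows "hausdorff_dim (F_set \<nu>) \<le>
           (if \<alpha> = \<infinity> then 0 else 1 / (2 * (1 + real_of_ereal \<alpha>)))"
proof -
  let ?X = "{s. 0 \<le> s \<and> hausdorff_measure s (F_set \<nu>) = 0}"
  have bdd: "bdd_below ?X" by (rule bdd_belowI[of _ 0]) auto
  have key: "Inf ?X \<le> T" if H: "\<And>t. T < t \<Longrightarrow> \<exists>s\<in>?X. s \<le> t" for T
  proof (rule field_le_epsilon)
    fix e :: real assume "0 < e"
    then obtain s where s: "s \<in> ?X" "s \<le> T + e" using H[of "T + e"] by auto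
    have "Inf ?X \<le> s" by (rule cInf_lower[OF s(1) bdd])
    then show "Inf ?X \<le> T + e" using s(2) by linarith
  qed
  have pick: "\<exists>s\<in>?X. s \<le> t" if \<beta>: "0 < \<beta>" and N1: "\<And>n. N1 \<le> n \<Longrightarrow> \<beta> * real n \<le> real (\<nu> n)"
    and t: "1 / (2 * (1 + \<beta>)) < t" for \<beta> t N1
  proof -
    define a where "a = 1 / (2 * (1 + \<beta>))"
    define s where "s = (a + min t (1/2)) / 2"
    have a0: "0 < a" using \<beta> by (simp add: a_def)
    have ah: "a < 1/2" using \<beta> by (simp add: a_def field_simps)
    have s1: "a < s" "s < 1/2" "s \<le> t" using t ah unfolding s_def a_def[symmetric] by (auto simp: min_def)
    then have "hausdorff_measure s (F_set \<nu>) = 0" using pos_case[OF \<beta> _ _ N1] unfolding a_def by blast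
    moreover have "0 \<le> s" using a0 s1 by linarith
    ultimately show ?thesis using s1 by blast
  qed
  have ev: "\<exists>N1. \<forall>n\<ge>N1. \<beta> * real n \<le> real (\<nu> n)" if "ereal \<beta> < \<alpha>" for \<beta>
  proof -
    have "eventually (\<lambda>n. ereal \<beta> < ereal (real (\<nu> n) / real n)) sequentially"
    proof -
      have "ereal \<beta> < liminf (\<lambda>n. ereal (real (\<nu> n) / real n))" using that alpha by simp
      from less_LiminfD[OF this] show ?thesis .
    qed
    then obtain N where N: "\<And>n. N \<le> n \<Longrightarrow> \<beta> < real (\<nu> n) / real n"
      unfolding eventually_sequentially by auto
    show ?thesis
    proof (intro exI allI impI)
      fix n assume "max N 1 \<le> n"
      then have "\<beta> < real (\<nu> n) / real n" "0 < real n" using N by auto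
      then show "\<beta> * real n \<le> real (\<nu> n)" by (simp add: field_simps)
    qed
  qed
  have a0: "0 \<le> \<alpha>" unfolding alpha by (intro Liminf_bounded) auto
  show ?thesis
  proof (cases \<alpha>)
    case PInf
    have "Inf ?X \<le> 0"
    proof (rule key)
      fix t :: real assume t: "0 < t"
      define \<beta> where "\<beta> = max 1 (1 / t)"
      have \<beta>: "0 < \<beta>" "1 / t \<le> \<beta>" by (auto simp: \<beta>_def)
      obtain N1 where N1: "\<And>n. N1 \<le> n \<Longrightarrow> \<beta> * real n \<le> real (\<nu> n)" using ev[of \<beta>] PInf by auto
      have "1 / \<beta> \<le> t" using \<beta> t by (simp add: field_simps)
      moreover have "1 / (2 * (1 + \<beta>)) < 1 / \<beta>" using \<beta> by (simp add: field_simps)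
      ultimately have "1 / (2 * (1 + \<beta>)) < t" by linarith
      then show "\<exists>s\<in>?X. s \<le> t" using pick[OF \<beta>(1) N1] by blast
    qed
    then show ?thesis using PInf by (simp add: hausdorff_dim_def)
  next
    case (real r)
    have r0: "0 \<le> r" using a0 real by simp
    have "Inf ?X \<le> 1 / (2 * (1 + r))"
    proof (cases "r = 0")
      case True
      show ?thesis
      proof (rule key)
        fix t :: real assume t: "1 / (2 * (1 + r)) < t"
        then have t2: "1/2 < t" using True by simp
        define s where "s = (1/2 + min t 1) / 2"
        have s1: "1/2 < s" "s \<le> t" using t2 by (auto simp: s_def min_def)
        then have "hausdorff_measure s (F_set \<nu>) = 0" using zero_case by blast
        then show "\<exists>s\<in>?X. s \<le> t" using s1 by (intro bexI[of _ s]) auto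
      qed
    next
      case False
      then have rp: "0 < r" using r0 by simp
      show ?thesis
      proof (rule key)
        fix t :: real assume t: "1 / (2 * (1 + r)) < t"
        have tp: "0 < t" using t r0 by (smt (verit) divide_pos_pos)
        have "1 < 2 * t * (1 + r)" using t r0 by (simp add: field_simps)
        then have tr: "1 / (2 * t) - 1 < r" using tp by (simp add: field_simps)
        define m where "m = max (r / 2) (1 / (2 * t) - 1)"
        have m: "m < r" "r / 2 \<le> m" "1 / (2 * t) - 1 \<le> m" using tr rp by (auto simp: m_def)
        define \<beta> where "\<beta> = (m + r) / 2"
        have \<beta>: "0 < \<beta>" "\<beta> < r" "1 / (2 * t) - 1 < \<beta>" using m rp by (auto simp: \<beta>_def)
        obtain N1 where N1: "\<And>n. N1 \<le> n \<Longrightarrow> \<beta> * real n \<le> real (\<nu> n)"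
          using ev[of \<beta>] real \<beta> by auto
        have "1 < 2 * t * (1 + \<beta>)" using \<beta>(3) tp by (simp add: field_simps)
        then have "1 / (2 * (1 + \<beta>)) < t" using \<beta> tp by (simp add: field_simps)
        then show "\<exists>s\<in>?X. s \<le> t" using pick[OF \<beta>(1) N1] by blast
      qed
    qed
    then show ?thesis using real by (simp add: hausdorff_dim_def)
  next
    case MInf
    then show ?thesis using a0 by simp
  qed
qed

end
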